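(* If $(a,b)\in R_1\cup R_2$, then $J(a,b)\ge 3/17$.
   Context: For $(a,b)\in\mathbb R^2$ define $f_{a,b}(x_1,x_2)=[b+a(x_1+x_2)+x_1x_2](2-x_1-x_2)$. Let $X_1=\{(x_1,x_2):-1\le x_1\le 0,\ -x_1\le x_2\le 1\}$ and $X_2=\{(x_1,x_2):-1\le x_1\le0,\ x_1\le x_2\le -x_1\}$. Let $\chi_{a,b}=\max_{X_1\cup X_2}f_{a,b}$, $m_{a,b}=\min_{X_1\cup X_2}f_{a,b}$, $R=\{(a,b)\in\mathbb R^2: m_{a,b}>0\}$, and for $(a,b)\in R$ let $J(a,b)=\frac{\chi_{a,b}-m_{a,b}}{\chi_{a,b}+m_{a,b}}$. Whenever $(1-2a)^2\ge3(b-2a)$ let $t_-=\frac{2a-1-\sqrt{(1-2a)^2-3(b-2a)}}{3/2}$. Define $R_1=\{(a,b)\in R:(1-2a)^2<3(b-2a)\}$ and $R_2=\{(a,b)\in R:(1-2a)^2\ge3(b-2a)>0,\ t_-\notin[0,2]\}$. *)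

theory Defs
  imports "HOL-Analysis.Analysis"
begin

definition f_ab :: "real \<Rightarrow> real \<Rightarrow> real \<times> real \<Rightarrow> real" where
  "f_ab a b x = (b + a * (fst x + snd x) + fst x * snd x) * (2 - fst x - snd x)"

definition X1 :: "(real \<times> real) set" where
  "X1 = {(x1, x2). -1 \<le> x1 \<and> x1 \<le> 0 \<and> -x1 \<le> x2 \<and> x2 \<le> 1}"

definition X2 :: "(real \<times> real) set" where
  "X2 = {(x1, x2). -1 \<le> x1 \<and> x1 \<le> 0 \<and> x1 \<le> x2 \<and> x2 \<le> -x1}"

text \<open>Max / min of the continuous function over the compact set X1 \<union> X2
  (they are attained, so Sup/Inf equal max/min).\<close>
definition chi :: "real \<Rightarrow> real \<Rightarrow> real" where
  "chi a b = (SUP x\<in>X1 \<union> X2. f_ab a b x)"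

definition m_ab :: "real \<Rightarrow> real \<Rightarrow> real" where
  "m_ab a b = (INF x\<in>X1 \<union> X2. f_ab a b x)"

definition R :: "(real \<times> real) set" where
  "R = {(a, b). m_ab a b > 0}"

definition J :: "real \<Rightarrow> real \<Rightarrow> real" where
  "J a b = (chi a b - m_ab a b) / (chi a b + m_ab a b)"

definition t_minus :: "real \<Rightarrow> real \<Rightarrow> real" where
  "t_minus a b = (2*a - 1 - sqrt ((1 - 2*a)^2 - 3*(b - 2*a))) / (3/2)"

definition R1 :: "(real \<times> real) set" where
  "R1 = {(a, b). (a, b) \<in> R \<and> (1 - 2*a)^2 < 3*(b - 2*a)}"

definition R2 :: "(real \<times> real) set" where
  "R2 = {(a, b). (a, b) \<in> R \<and> (1 - 2*a)^2 \<ge> 3*(b - 2*a) \<and> 3*(b - 2*a) > 0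
                 \<and> t_minus a b \<notin> {0..2}}"

end

theory Submission
  imports Defs
begin

lemma f_bound:
  assumes "x \<in> X1 \<union> X2"
  shows "\<bar>f_ab a b x\<bar> \<le> (\<bar>b\<bar> + 2*\<bar>a\<bar> + 1) * 4"
proof -
  obtain x1 x2 where x: "x = (x1, x2)" by (cases x)
  have h: "-1 \<le> x1" "x1 \<le> 0" "x1 \<le> x2" "x2 \<le> 1"
    using assms unfolding x X1_def X2_def by auto
  have s: "\<bar>x1 + x2\<bar> \<le> 2" using h by auto
  have p: "\<bar>x1 * x2\<bar> \<le> 1"
  proof -
    have "\<bar>x1\<bar> \<le> 1" "\<bar>x2\<bar> \<le> 1" using h by auto
    then show ?thesis by (simp add: abs_mult mult_le_one)
  qed
  have as: "\<bar>a * (x1 + x2)\<bar> \<le> 2 * \<bar>a\<bar>"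
    using s by (simp add: abs_mult mult_left_mono mult.commute)
  have A: "\<bar>b + a * (x1 + x2) + x1 * x2\<bar> \<le> \<bar>b\<bar> + 2*\<bar>a\<bar> + 1"
    using as p by linarith
  have B: "\<bar>2 - x1 - x2\<bar> \<le> 4" using s by linarith
  have "\<bar>f_ab a b x\<bar> = \<bar>b + a * (x1 + x2) + x1 * x2\<bar> * \<bar>2 - x1 - x2\<bar>"
    unfolding f_ab_def x by (simp add: abs_mult)
  also have "\<dots> \<le> (\<bar>b\<bar> + 2*\<bar>a\<bar> + 1) * 4"
    by (rule mult_mono[OF A B]) auto
  finally show ?thesis .
qed

lemma key_ineq:
  fixes a b :: real
  assumes "(a, b) \<in> R1 \<union> R2"
  shows "18 * b \<ge> 66 * a - 28"
proof (cases "(1 - 2*a)^2 < 3*(b - 2*a)")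
  case True
  have "12*a^2 - 27*a + 17 > 0"
  proof -
    have "0 \<le> 12*(a-9/8)^2" by simp
    then show ?thesis by (simp add: power2_eq_square algebra_simps)
  qed
  then show ?thesis using True by (simp add: power2_eq_square algebra_simps)
next
  case False
  define d where "d = (1 - 2*a)^2 - 3*(b - 2*a)"
  have c: "b - 2*a > 0" and tm: "t_minus a b \<notin> {0..2}"
    using assms False unfolding R1_def R2_def by auto
  have d0: "d \<ge> 0" using False unfolding d_def by linarith
  have tmd: "t_minus a b = (2*a - 1 - sqrt d) / (3/2)" unfolding t_minus_def d_def by simp
  have sq: "(sqrt d)^2 = d" using d0 by simp
  have sd: "sqrt d \<ge> 0" using d0 by simp
  show ?thesis
  proof (cases "t_minus a b < 0")
    case True
    have "2*a - 1 < sqrt d" using True tmd by (simp add: divide_less_0_iff)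
    have "a < 1/2"
    proof (rule ccontr)
      assume "\<not> a < 1/2"
      then have "0 \<le> 2*a - 1" by simp
      then have "(2*a-1)^2 < (sqrt d)^2"
        using \<open>2*a - 1 < sqrt d\<close> by (simp add: power_strict_mono)
      moreover have "(1 - 2*a)^2 = (2*a-1)^2" by (simp add: power2_commute)
      ultimately show False using sq c d_def by (smt (verit))
    qed
    then show ?thesis using c by linarith
  next
    case False
    then have "t_minus a b > 2" using tm by auto
    then have g: "2*a - 4 > sqrt d" using tmd by (simp add: field_simps)
    then have "(sqrt d)^2 < (2*a-4)^2" using sd by (intro power_strict_mono) auto
    then have "b > 6*a - 5" using sq unfolding d_def by (simp add: power2_eq_square algebra_simps)
    moreover have "a > 2" using g sd by linarith
    ultimately show ?thesis by linarith
  qed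
qed

theorem propositionA3:
  fixes a b :: real
  assumes "(a, b) \<in> R1 \<union> R2"
  shows "J a b \<ge> 3/17"
proof -
  have m0: "m_ab a b > 0" using assms unfolding R1_def R2_def R_def by auto
  have bda: "bdd_above (f_ab a b ` (X1 \<union> X2))"
    by (rule bdd_aboveI2[where M="(\<bar>b\<bar> + 2*\<bar>a\<bar> + 1) * 4"])
       (use f_bound in \<open>auto simp: abs_le_iff\<close>)
  have bdb: "bdd_below (f_ab a b ` (X1 \<union> X2))"
    by (rule bdd_belowI2[where m="-((\<bar>b\<bar> + 2*\<bar>a\<bar> + 1) * 4)"])
       (metis f_bound abs_le_iff minus_le_iff)
  have p1: "(-1, -1) \<in> X1 \<union> X2" unfolding X2_def by auto
  have p2: "(0, 1) \<in> X1 \<union> X2" unfolding X1_def by auto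
  have c1: "chi a b \<ge> f_ab a b (-1, -1)"
    unfolding chi_def by (rule cSUP_upper[OF p1 bda])
  have c2: "m_ab a b \<le> f_ab a b (0, 1)"
    unfolding m_ab_def by (rule cINF_lower[OF bdb p2])
  have v1: "f_ab a b (-1, -1) = 4 * (b - 2*a + 1)" unfolding f_ab_def by simp
  have v2: "f_ab a b (0, 1) = a + b" unfolding f_ab_def by simp
  have k: "18 * b \<ge> 66 * a - 28" by (rule key_ineq[OF assms])
  have e1: "chi a b \<ge> 4 * b - 8 * a + 4" using c1 v1 by simp
  have e2: "m_ab a b \<le> a + b" using c2 v2 by simp
  have "14 * chi a b \<ge> 20 * m_ab a b" using e1 e2 k by linarith
  moreover have "chi a b + m_ab a b > 0" using e1 e2 k m0 by linarith
  ultimately show ?thesis unfolding J_def by (simp add: field_simps)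
qed

end
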